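(* Let $c_1\neq c_2$ be points in $[0,1]$ and consider the scheme (EQRF2) $$y_{n+1}=e^{\tau A}y_n+\tau\varphi_1(\tau A)\alpha_{0,n}+\Gamma(1+r)\Bigl((t_n+\tau)^{1+r}\varphi_{1+r}\bigl((t_n+\tau)A\bigr)-t_n^{1+r}e^{\tau A}\varphi_{1+r}(t_nA)\Bigr)\alpha_{1,n},$$ $n=0,\dots,N-1$, started from the exact initial value $y_0$, where $$\alpha_{1,n}=\frac{h((t_n+c_2\tau)^r)-h((t_n+c_1\tau)^r)}{(t_n+c_2\tau)^r-(t_n+c_1\tau)^r},\qquad \alpha_{0,n}=h((t_n+c_1\tau)^r)-(t_n+c_1\tau)^r\alpha_{1,n}.$$ Assume $h$ is twice differentiable on $[0,\infty)$ with bounded derivatives $h',h''$. Then for all $N\in\mathbb{N}$ and $0\le n\le N$, $$\|y(t_n)-y_n\|\le\begin{cases}C\tau^{\min\{1+2r,\,2\}}, & r\neq\tfrac12,\\ C\tau^2\bigl(1+\lvert\log\tau\rvert\bigr), & r=\tfrac12,\end{cases}$$ where $C$ may depend on $T$ (and on $r,h,c_1,c_2$ and the semigroup) but not on $n$ or $\tau$.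
   Context: $(X,\|\cdot\|)$ is a Banach space and $A:\mathcal{D}(A)\subset X\to X$ is a linear operator generating a strongly continuous semigroup $\{e^{tA}\}_{t\ge0}$ on $X$. Fix $T>0$, $0<r<1$, $y_0\in X$ and $h:[0,\infty)\to X$. The problem is $y'(t)=Ay(t)+h(t^r)$, $y(0)=y_0$, $t\in[0,T]$, with (mild) solution $y(t)=e^{tA}y_0+\int_0^te^{(t-s)A}h(s^r)\,ds$. Time grid: $N\in\mathbb{N}$, $\tau=T/N$, $t_n=n\tau$. For $\lambda>0$ and $t\ge0$ the fractional $\varphi$ function is the bounded operator $\varphi_\lambda(tA)v=\frac{1}{\Gamma(\lambda)}\int_0^1e^{(1-\theta)tA}\theta^{\lambda-1}v\,d\theta$ ($v\in X$), $\Gamma$ being Euler's gamma function; in particular $\tau\varphi_1(\tau A)v=\int_0^\tau e^{(\tau-s)A}v\,ds$. Convention $0^{1+r}=0$. *)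

theory Defs
  imports "HOL-Analysis.Analysis"
begin

text \<open>A strongly continuous (C0) semigroup on a Banach space, given by the family
  S t = e^{tA}, t \<ge> 0.  The generator A is determined by S; the statement only
  involves A through e^{tA} and the phi functions.\<close>
definition C0_semigroup :: "(real \<Rightarrow> 'a::banach \<Rightarrow> 'a) \<Rightarrow> bool" where
  "C0_semigroup S \<longleftrightarrow>
     (\<forall>t\<ge>0. bounded_linear (S t)) \<and>
     S 0 = id \<and>
     (\<forall>s\<ge>0. \<forall>t\<ge>0. S (s + t) = S s \<circ> S t) \<and>
     (\<forall>v. ((\<lambda>t. S t v) \<longlongrightarrow> v) (at_right 0))"

text \<open>Fractional phi function: phi_lam(tA) v = 1/Gamma(lam) int_0^1 e^{(1-th)tA} th^(lam-1) v dth.\<close>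
definition phi_frac :: "(real \<Rightarrow> 'a::banach \<Rightarrow> 'a) \<Rightarrow> real \<Rightarrow> real \<Rightarrow> 'a \<Rightarrow> 'a" where
  "phi_frac S lam t v =
     (1 / Gamma lam) *\<^sub>R integral {0..1} (\<lambda>\<theta>. (\<theta> powr (lam - 1)) *\<^sub>R S ((1 - \<theta>) * t) v)"

text \<open>Mild solution of y' = A y + h(t^r), y(0) = y0.\<close>
definition mild_sol :: "(real \<Rightarrow> 'a::banach \<Rightarrow> 'a) \<Rightarrow> (real \<Rightarrow> 'a) \<Rightarrow> real \<Rightarrow> 'a \<Rightarrow> real \<Rightarrow> 'a" where
  "mild_sol S h r y0 t = S t y0 + integral {0..t} (\<lambda>s. S (t - s) (h (s powr r)))"

text \<open>The scheme EQRF2 with step size tau, t_n = n tau.  Note 0 powr x = 0.\<close>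
fun eqrf2 :: "(real \<Rightarrow> 'a::banach \<Rightarrow> 'a) \<Rightarrow> (real \<Rightarrow> 'a) \<Rightarrow> real \<Rightarrow> real \<Rightarrow> real \<Rightarrow> real \<Rightarrow> 'a \<Rightarrow> nat \<Rightarrow> 'a" where
  "eqrf2 S h r c1 c2 \<tau> y0 0 = y0"
| "eqrf2 S h r c1 c2 \<tau> y0 (Suc n) =
    (let tn = real n * \<tau>;
         a = (tn + c1 * \<tau>) powr r;
         b = (tn + c2 * \<tau>) powr r;
         \<alpha>1 = (1 / (b - a)) *\<^sub>R (h b - h a);
         \<alpha>0 = h a - a *\<^sub>R \<alpha>1
     in S \<tau> (eqrf2 S h r c1 c2 \<tau> y0 n)
        + \<tau> *\<^sub>R phi_frac S 1 \<tau> \<alpha>0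
        + Gamma (1 + r) *\<^sub>R
            ((tn + \<tau>) powr (1 + r) *\<^sub>R phi_frac S (1 + r) (tn + \<tau>) \<alpha>1
             - tn powr (1 + r) *\<^sub>R S \<tau> (phi_frac S (1 + r) tn \<alpha>1)))"

end

theory Submission
  imports Defs
begin


lemma ubp:
  fixes T :: "nat \<Rightarrow> 'a::banach \<Rightarrow> 'b::real_normed_vector"
  assumes bl: "\<And>n. bounded_linear (T n)" and pb: "\<And>x. \<exists>B. \<forall>n. norm (T n x) \<le> B"
  shows "\<exists>B. \<forall>n x. norm (T n x) \<le> B * norm x"
proof -
  define F where "F k = {x. \<forall>n. norm (T n x) \<le> real k}" for k :: nat
  have clF: "closed (F k)" for k
  proof -
    have "F k = (\<Inter>n. {x. norm (T n x) \<le> real k})" by (auto simp: F_def)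
    moreover have "closed {x. norm (T n x) \<le> real k}" for n
      by (intro closed_Collect_le continuous_intros linear_continuous_on bounded_linear.linear bl
           continuous_on_norm)
    ultimately show ?thesis by auto
  qed
  have UF: "(\<Union>k. F k) = UNIV"
  proof safe
    fix x :: 'a
    obtain B where "\<forall>n. norm (T n x) \<le> B" using pb by blast
    moreover obtain k :: nat where "B \<le> real k" using real_arch_simple by blast
    ultimately have "x \<in> F k" unfolding F_def by (auto intro: order_trans)
    then show "x \<in> (\<Union>k. F k)" by blast
  qed simp
  have "\<exists>k. interior (F k) \<noteq> {}"
  proof (rule ccontr)
    assume "\<not> ?thesis"
    then have "euclidean interior_of \<Union>(range F) = {}"
      by (intro Baire_category_alt) (auto simp: completely_metrizable_space_euclidean clF)
    then show False using UF by simp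
  qed
  then obtain k x0 where "x0 \<in> interior (F k)" by blast
  then obtain e where e: "e > 0" "ball x0 e \<subseteq> F k"
    using open_contains_ball_eq open_interior interior_subset by (metis subset_trans)
  have x0F: "x0 \<in> F k" using e by auto
  show ?thesis
  proof (intro exI allI)
    fix n x
    show "norm (T n x) \<le> (4 * real k / e) * norm x"
    proof (cases "x = 0")
      case True then show ?thesis using linear_0[OF bounded_linear.linear[OF bl]] by simp
    next
      case False
      define c where "c = e / (2 * norm x)"
      have c: "c > 0" using False e by (simp add: c_def)
      have "norm (c *\<^sub>R x) < e" using False e by (simp add: c_def)
      then have "x0 + c *\<^sub>R x \<in> F k" using e by (auto simp: dist_norm)
      then have 1: "norm (T n (x0 + c *\<^sub>R x)) \<le> real k" by (auto simp: F_def)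
      have 2: "norm (T n x0) \<le> real k" using x0F by (auto simp: F_def)
      have "T n (c *\<^sub>R x) = T n (x0 + c *\<^sub>R x) - T n x0"
        by (simp add: linear_add[OF bounded_linear.linear[OF bl]])
      then have "norm (T n (c *\<^sub>R x)) \<le> 2 * real k"
        using 1 2 norm_triangle_ineq4[of "T n (x0 + c *\<^sub>R x)" "T n x0"] by (simp only:)
      then have "c * norm (T n x) \<le> 2 * real k"
        using c by (simp add: linear_scale[OF bounded_linear.linear[OF bl]])
      then have "norm (T n x) \<le> 2 * real k / c" using c by (simp add: field_simps)
      also have "\<dots> = (4 * real k / e) * norm x" using False e by (simp add: c_def field_simps)
      finally show ?thesis .
    qed
  qed
qed



context
  fixes S :: "real \<Rightarrow> 'a::banach \<Rightarrow> 'a"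
  assumes C0: "C0_semigroup S"
begin

lemma sg_bl: "t \<ge> 0 \<Longrightarrow> bounded_linear (S t)"
  using C0 by (auto simp: C0_semigroup_def)

lemma sg_lin: "t \<ge> 0 \<Longrightarrow> linear (S t)"
  using sg_bl bounded_linear.linear by blast

lemma sg_0: "S 0 v = v"
  using C0 by (auto simp: C0_semigroup_def)

lemma sg_add: "s \<ge> 0 \<Longrightarrow> t \<ge> 0 \<Longrightarrow> S (s + t) v = S s (S t v)"
  using C0 unfolding C0_semigroup_def by (metis comp_apply)

lemma sg_right:
  assumes "e > 0" shows "\<exists>d>0. \<forall>t. 0 \<le> t \<and> t < d \<longrightarrow> norm (S t v - v) < e"
proof -
  have "((\<lambda>t. S t v) \<longlongrightarrow> v) (at_right 0)" using C0 by (auto simp: C0_semigroup_def)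
  then have "eventually (\<lambda>t. dist (S t v) v < e) (at_right 0)"
    using assms by (auto simp: tendsto_iff)
  then obtain b where b: "b > 0" "\<And>y. y > 0 \<Longrightarrow> y < b \<Longrightarrow> dist (S y v) v < e"
    by (auto simp: eventually_at_right_field)
  show ?thesis
  proof (intro exI[of _ b] conjI allI impI)
    fix t assume t: "0 \<le> t \<and> t < b"
    show "norm (S t v - v) < e"
    proof (cases "t = 0")
      case True then show ?thesis using assms by (simp add: sg_0)
    next
      case False then show ?thesis using b t by (auto simp: dist_norm)
    qed
  qed (use b in auto)
qed

lemma sg_local_bound:
  "\<exists>d>0. \<exists>M\<ge>1. \<forall>t. 0 \<le> t \<and> t \<le> d \<longrightarrow> (\<forall>v. norm (S t v) \<le> M * norm v)"
proof (rule ccontr)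
  assume H: "\<not> ?thesis"
  have "\<forall>n::nat. \<exists>t v. 0 \<le> t \<and> t \<le> 1 / (real n + 1) \<and> norm (S t v) > real (n + 1) * norm v"
  proof
    fix n :: nat
    have "\<not> (\<forall>t. 0 \<le> t \<and> t \<le> 1 / (real n + 1) \<longrightarrow> (\<forall>v. norm (S t v) \<le> real (n+1) * norm v))"
      using H by (metis add_nonneg_pos le_add_same_cancel2 linorder_not_le of_nat_0_le_iff of_nat_1 of_nat_add zero_less_divide_1_iff zero_less_one)
    then show "\<exists>t v. 0 \<le> t \<and> t \<le> 1 / (real n + 1) \<and> norm (S t v) > real (n + 1) * norm v"
      by (auto simp: not_le)
  qed
  then obtain tt vv where tv: "\<And>n. 0 \<le> tt n" "\<And>n. tt n \<le> 1 / (real n + 1)"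
    "\<And>n. norm (S (tt n) (vv n)) > real (n + 1) * norm (vv n)"
    by metis
  have "\<exists>B. \<forall>n x. norm (S (tt n) x) \<le> B * norm x"
  proof (rule ubp)
    show "bounded_linear (S (tt n))" for n using tv sg_bl by auto
    fix x
    have tt0: "tt \<longlonglongrightarrow> 0"
    proof (rule tendsto_sandwich[of "\<lambda>_. 0" _ _ "\<lambda>n. 1 / (real n + 1)"])
      show "(\<lambda>n. 1 / (real n + 1)) \<longlonglongrightarrow> 0" by (rule LIMSEQ_inverse_real_of_nat_add[unfolded inverse_eq_divide, simplified add.commute, of 0, simplified] | real_asymp)
    qed (use tv in auto)
    have "(\<lambda>n. S (tt n) x) \<longlonglongrightarrow> x"
    proof (rule LIMSEQ_I)
      fix e :: real assume "e > 0"
      then obtain d where d: "d > 0" "\<forall>t. 0 \<le> t \<and> t < d \<longrightarrow> norm (S t x - x) < e"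
        using sg_right by blast
      obtain N where "\<forall>n\<ge>N. norm (tt n - 0) < d" using LIMSEQ_D[OF tt0 d(1)] by blast
      then show "\<exists>N. \<forall>n\<ge>N. norm (S (tt n) x - x) < e" using d tv by auto
    qed
    then have "bounded (range (\<lambda>n. S (tt n) x))"
      using convergent_imp_bounded by blast
    then show "\<exists>B. \<forall>n. norm (S (tt n) x) \<le> B"
      by (auto simp: bounded_iff)
  qed
  then obtain B where B: "\<And>n x. norm (S (tt n) x) \<le> B * norm x" by blast
  obtain n :: nat where "B \<le> real n" using real_arch_simple by blast
  then have "B * norm (vv n) \<le> real (n+1) * norm (vv n)"
    by (intro mult_right_mono) auto
  then show False using B[of n "vv n"] tv(3)[of n] by linarith
qed

lemma sg_bound:
  "\<exists>M\<ge>1. \<forall>t. 0 \<le> t \<and> t \<le> K \<longrightarrow> (\<forall>v. norm (S t v) \<le> M * norm v)"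
proof -
  obtain d M where dM: "d > 0" "M \<ge> 1" "\<And>t v. 0 \<le> t \<Longrightarrow> t \<le> d \<Longrightarrow> norm (S t v) \<le> M * norm v"
    using sg_local_bound by blast
  have P: "\<forall>t v. 0 \<le> t \<and> t \<le> real m * d \<longrightarrow> norm (S t v) \<le> M ^ (m+1) * norm v" for m
  proof (induction m)
    case 0
    then show ?case using dM by (auto simp: sg_0)
  next
    case (Suc m)
    show ?case
    proof (intro allI impI)
      fix t v assume t: "0 \<le> t \<and> t \<le> real (Suc m) * d"
      show "norm (S t v) \<le> M ^ (Suc m + 1) * norm v"
      proof (cases "t \<le> d")
        case True
        then have "norm (S t v) \<le> M * norm v" using dM t by auto
        also have "\<dots> \<le> M ^ (Suc m + 1) * norm v"
          using power_increasing[of 1 "Suc m + 1" M] dM(2) by (intro mult_right_mono) auto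
        finally show ?thesis .
      next
        case False
        have e: "S t v = S d (S (t - d) v)" using sg_add[of d "t - d" v] False dM(1) by auto
        have "norm (S t v) \<le> M * norm (S (t - d) v)"
          unfolding e by (rule dM(3)) (use dM in auto)
        also have "\<dots> \<le> M * (M ^ (m+1) * norm v)"
          using Suc[rule_format, of "t - d" v] False t dM
          by (intro mult_left_mono) (auto simp: algebra_simps)
        finally show ?thesis by (simp add: algebra_simps)
      qed
    qed
  qed
  obtain m :: nat where "K / d \<le> real m" using real_arch_simple by blast
  then have "K \<le> real m * d" using dM(1) by (simp add: field_simps)
  then show ?thesis using P[of m] dM(2)
    by (intro exI[of _ "M ^ (m+1)"]) (auto intro: one_le_power order_trans)
qed

end


context
  fixes S :: "real \<Rightarrow> 'a::banach \<Rightarrow> 'a"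
  assumes C0: "C0_semigroup S"
begin

lemma sg_diff_bound:
  assumes M: "\<And>t v. 0 \<le> t \<Longrightarrow> t \<le> K \<Longrightarrow> norm (S t v) \<le> M * norm v"
    and ab: "0 \<le> a" "0 \<le> b" "a \<le> K" "b \<le> K"
  shows "norm (S a w - S b w) \<le> M * norm (S \<bar>a - b\<bar> w - w)"
proof (cases "b \<le> a")
  case True
  have "S a w = S b (S (a - b) w)" using sg_add[OF C0, of b "a - b" w] True ab by simp
  then have "S a w - S b w = S b (S (a - b) w - w)"
    using linear_diff[OF sg_lin[OF C0 ab(2)]] by simp
  then show ?thesis using M[of b] ab True by simp
next
  case False
  have "S b w = S a (S (b - a) w)" using sg_add[OF C0, of a "b - a" w] False ab by simp
  then have "S b w - S a w = S a (S (b - a) w - w)"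
    using linear_diff[OF sg_lin[OF C0 ab(1)]] by simp
  then have "norm (S a w - S b w) = norm (S a (S (b - a) w - w))" by (metis norm_minus_commute)
  then show ?thesis using M[of a "S (b - a) w - w"] ab False by (simp add: norm_minus_commute)
qed

lemma sg_cont_comp:
  fixes f :: "'b::metric_space \<Rightarrow> real" and g :: "'b \<Rightarrow> 'a"
  assumes f: "continuous_on D f" and g: "continuous_on D g"
    and fK: "\<And>x. x \<in> D \<Longrightarrow> 0 \<le> f x \<and> f x \<le> K"
  shows "continuous_on D (\<lambda>x. S (f x) (g x))"
proof -
  obtain M where M: "M \<ge> 1" "\<And>t v. 0 \<le> t \<Longrightarrow> t \<le> K \<Longrightarrow> norm (S t v) \<le> M * norm v"
    using sg_bound[OF C0, of K] by blast
  show ?thesis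
    unfolding continuous_on_iff
  proof (intro ballI allI impI)
    fix x e assume x: "x \<in> D" and e: "(0::real) < e"
    have e2: "e / (2 * M) > 0" using e M by simp
    obtain d1 where d1: "d1 > 0" "\<And>t. 0 \<le> t \<Longrightarrow> t < d1 \<Longrightarrow> norm (S t (g x) - g x) < e / (2 * M)"
      using sg_right[OF C0 e2, of "g x"] by blast
    obtain d2 where d2: "d2 > 0" "\<And>x'. x' \<in> D \<Longrightarrow> dist x' x < d2 \<Longrightarrow> dist (f x') (f x) < d1"
      using f x d1(1) unfolding continuous_on_iff by blast
    obtain d3 where d3: "d3 > 0" "\<And>x'. x' \<in> D \<Longrightarrow> dist x' x < d3 \<Longrightarrow> dist (g x') (g x) < e / (2 * M)"
      using g x e2 unfolding continuous_on_iff by blast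
    show "\<exists>d>0. \<forall>x'\<in>D. dist x' x < d \<longrightarrow> dist (S (f x') (g x')) (S (f x) (g x)) < e"
    proof (intro exI[of _ "min d2 d3"] conjI ballI impI)
      fix x' assume x': "x' \<in> D" and dx: "dist x' x < min d2 d3"
      have fx': "0 \<le> f x'" "f x' \<le> K" and fx: "0 \<le> f x" "f x \<le> K" using fK x x' by auto
      have "S (f x') (g x') - S (f x) (g x) = S (f x') (g x' - g x) + (S (f x') (g x) - S (f x) (g x))"
        using linear_diff[OF sg_lin[OF C0 fx'(1)]] by simp
      then have "norm (S (f x') (g x') - S (f x) (g x)) \<le> norm (S (f x') (g x' - g x)) + norm (S (f x') (g x) - S (f x) (g x))"
        by (metis norm_triangle_ineq)
      also have "\<dots> \<le> M * norm (g x' - g x) + M * norm (S \<bar>f x' - f x\<bar> (g x) - g x)"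
        by (intro add_mono M(2) sg_diff_bound[OF M(2)]) (use fx fx' in auto)
      also have "\<dots> < M * (e / (2 * M)) + M * (e / (2 * M))"
      proof (intro add_less_le_mono mult_strict_left_mono mult_left_mono)
        show "norm (g x' - g x) < e / (2 * M)" using d3 x' dx by (auto simp: dist_norm)
        have "\<bar>f x' - f x\<bar> < d1" using d2 x' dx by (auto simp: dist_real_def)
        then show "norm (S \<bar>f x' - f x\<bar> (g x) - g x) \<le> e / (2 * M)" using d1 by (auto intro: less_imp_le)
      qed (use M in auto)
      also have "\<dots> = e" using M by (simp add: field_simps)
      finally show "dist (S (f x') (g x')) (S (f x) (g x)) < e" by (simp add: dist_norm)
    qed (use d2 d3 in auto)
  qed
qed

end


context
  fixes S :: "real \<Rightarrow> 'a::banach \<Rightarrow> 'a"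
  assumes C0: "C0_semigroup S"
begin

lemma conv_cont:
  assumes g: "continuous_on {0..t} g"
  shows "continuous_on {0..t} (\<lambda>s. S (t - s) (g s))"
  by (rule sg_cont_comp[OF C0 _ g, of _ t]) (auto intro!: continuous_intros)

lemma conv_split:
  assumes g: "continuous_on {0..a+\<tau>} g" and a: "0 \<le> a" and tau: "0 \<le> \<tau>"
  shows "integral {0..a+\<tau>} (\<lambda>s. S (a+\<tau>-s) (g s)) =
         S \<tau> (integral {0..a} (\<lambda>s. S (a-s) (g s))) + integral {0..\<tau>} (\<lambda>\<sigma>. S (\<tau>-\<sigma>) (g (a+\<sigma>)))"
proof -
  define F where "F s = S (a+\<tau>-s) (g s)" for s
  have Fi: "F integrable_on {0..a+\<tau>}"
    unfolding F_def by (rule integrable_continuous_interval, rule conv_cont[OF g])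
  have ga: "continuous_on {0..a} g" using g by (rule continuous_on_subset) (use tau in auto)
  have Gi: "(\<lambda>s. S (a-s) (g s)) integrable_on {0..a}"
    by (rule integrable_continuous_interval, rule conv_cont[OF ga])
  have "integral {0..a+\<tau>} F = integral {0..a} F + integral {a..a+\<tau>} F"
    using Henstock_Kurzweil_Integration.integral_combine[OF a _ Fi] tau by simp
  also have "integral {0..a} F = integral {0..a} (S \<tau> \<circ> (\<lambda>s. S (a-s) (g s)))"
  proof (rule integral_cong)
    fix s assume "s \<in> {0..a}"
    then show "F s = (S \<tau> \<circ> (\<lambda>s. S (a-s) (g s))) s"
      using sg_add[OF C0, of \<tau> "a - s" "g s"] tau unfolding F_def by (simp add: algebra_simps)
  qed
  also have "\<dots> = S \<tau> (integral {0..a} (\<lambda>s. S (a-s) (g s)))"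
    by (rule integral_linear[OF Gi sg_bl[OF C0 tau]])
  also have "integral {a..a+\<tau>} F = integral {a-a..a+\<tau>-a} (\<lambda>x. F (x + a))"
    by (rule integral_shift_real_ivl[symmetric])
  also have "\<dots> = integral {0..\<tau>} (\<lambda>\<sigma>. S (\<tau>-\<sigma>) (g (a+\<sigma>)))"
    unfolding F_def by (simp add: algebra_simps)
  finally show ?thesis unfolding F_def .
qed

end


lemma phi_ident:
  fixes S :: "real \<Rightarrow> 'a::banach \<Rightarrow> 'a"
  assumes t: "t \<ge> 0" and lam: "lam > 0"
  shows "(t powr lam * Gamma lam) *\<^sub>R phi_frac S lam t v =
         integral {0..t} (\<lambda>\<sigma>. (\<sigma> powr (lam-1)) *\<^sub>R S (t-\<sigma>) v)"
proof (cases "t = 0")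
  case True then show ?thesis by simp
next
  case False
  then have tp: "t > 0" using t by simp
  define f where "f \<sigma> = (\<sigma> powr (lam-1)) *\<^sub>R S (t-\<sigma>) v" for \<sigma>
  define I1 where "I1 = integral {0..1} (\<lambda>\<theta>. (\<theta> powr (lam - 1)) *\<^sub>R S ((1 - \<theta>) * t) v)"
  have img: "(\<lambda>x. x / t) ` {0..t} = {0..1}"
  proof
    show "(\<lambda>x. x / t) ` {0..t} \<subseteq> {0..1}" using tp by auto
    show "{0..1} \<subseteq> (\<lambda>x. x / t) ` {0..t}"
    proof
      fix y :: real assume "y \<in> {0..1}"
      then have "y = (t * y) / t" "t * y \<in> {0..t}" using tp by auto
      then show "y \<in> (\<lambda>x. x / t) ` {0..t}" by blast
    qed
  qed
  have "integral {0..1} (\<lambda>x. f (t * x)) = (1 / \<bar>t\<bar>) *\<^sub>R integral {0..t} f"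
    using integral_stretch_real[of t 0 t f] tp img by simp
  moreover have "integral {0..1} (\<lambda>x. f (t * x)) = integral {0..1} (\<lambda>x. t powr (lam - 1) *\<^sub>R ((x powr (lam - 1)) *\<^sub>R S ((1 - x) * t) v))"
  proof (rule integral_cong)
    fix x :: real assume "x \<in> {0..1}"
    then show "f (t * x) = t powr (lam - 1) *\<^sub>R ((x powr (lam - 1)) *\<^sub>R S ((1 - x) * t) v)"
      unfolding f_def using t by (simp add: powr_mult algebra_simps)
  qed
  also have "\<dots> = t powr (lam - 1) *\<^sub>R I1" unfolding I1_def by (rule integral_cmul)
  ultimately have "(1 / \<bar>t\<bar>) *\<^sub>R integral {0..t} f = t powr (lam - 1) *\<^sub>R I1" by simp
  then have "t *\<^sub>R ((1 / \<bar>t\<bar>) *\<^sub>R integral {0..t} f) = t *\<^sub>R (t powr (lam - 1) *\<^sub>R I1)" by (rule arg_cong)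
  moreover have "t *\<^sub>R ((1 / \<bar>t\<bar>) *\<^sub>R integral {0..t} f) = integral {0..t} f" using tp by simp
  ultimately have "integral {0..t} f = t *\<^sub>R (t powr (lam - 1) *\<^sub>R I1)" by simp
  also have "\<dots> = t powr lam *\<^sub>R I1"
    using tp by (simp add: powr_diff)
  finally have "integral {0..t} f = t powr lam *\<^sub>R I1" .
  moreover have "phi_frac S lam t v = (1 / Gamma lam) *\<^sub>R I1"
    unfolding phi_frac_def I1_def by simp
  moreover have "Gamma lam \<noteq> 0" using Gamma_real_pos[OF lam] by simp
  ultimately show ?thesis unfolding f_def by (simp add: field_simps)
qed



lemma powr_cont_shift:
  assumes "0 \<le> a" "0 < r"
  shows "continuous_on {0..t} (\<lambda>\<sigma>::real. (a + \<sigma>) powr r)"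
  by (rule continuous_on_powr') (use assms in \<open>auto intro!: continuous_intros\<close>)

context
  fixes S :: "real \<Rightarrow> 'a::banach \<Rightarrow> 'a" and h :: "real \<Rightarrow> 'a" and r :: real
  assumes C0: "C0_semigroup S" and hc: "continuous_on {0..} h" and r: "0 < r"
begin

lemma hcomp_cont:
  assumes "0 \<le> a"
  shows "continuous_on {0..t} (\<lambda>\<sigma>. h ((a + \<sigma>) powr r))"
proof -
  have "continuous_on {0..t} (\<lambda>\<sigma>::real. (a + \<sigma>) powr r)" by (rule powr_cont_shift[OF assms r])
  moreover have "(\<lambda>\<sigma>::real. (a + \<sigma>) powr r) ` {0..t} \<subseteq> {0..}" by auto
  ultimately show ?thesis using continuous_on_compose2[OF hc] by blast
qed

lemma exact_step:
  assumes a: "0 \<le> a" and tau: "0 \<le> \<tau>"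
  shows "mild_sol S h r y0 (a + \<tau>) = S \<tau> (mild_sol S h r y0 a) + integral {0..\<tau>} (\<lambda>\<sigma>. S (\<tau>-\<sigma>) (h ((a+\<sigma>) powr r)))"
proof -
  have g: "continuous_on {0..a+\<tau>} (\<lambda>s. h (s powr r))"
    using hcomp_cont[of 0 "a+\<tau>"] by simp
  have "S (a + \<tau>) y0 = S \<tau> (S a y0)" using sg_add[OF C0 tau a] by (simp add: add.commute)
  then show ?thesis
    unfolding mild_sol_def conv_split[OF C0 g a tau]
    using linear_add[OF sg_lin[OF C0 tau]] by simp
qed

lemma phi1_ident:
  assumes "\<tau> > 0"
  shows "\<tau> *\<^sub>R phi_frac S 1 \<tau> w = integral {0..\<tau>} (\<lambda>\<sigma>. S (\<tau>-\<sigma>) w)"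
proof -
  have "(\<tau> powr 1 * Gamma 1) *\<^sub>R phi_frac S 1 \<tau> w = integral {0..\<tau>} (\<lambda>\<sigma>. (\<sigma> powr (1-1)) *\<^sub>R S (\<tau>-\<sigma>) w)"
    by (rule phi_ident) (use assms in auto)
  also have "\<dots> = integral {0..\<tau>} (\<lambda>\<sigma>. S (\<tau>-\<sigma>) w)"
    by (rule integral_spike[of "{0}"]) auto
  finally show ?thesis using assms by simp
qed

lemma phir_ident:
  assumes "t \<ge> 0"
  shows "Gamma (1 + r) *\<^sub>R (t powr (1 + r) *\<^sub>R phi_frac S (1 + r) t w) = integral {0..t} (\<lambda>\<sigma>. S (t-\<sigma>) ((\<sigma> powr r) *\<^sub>R w))"
proof -
  have "(t powr (1+r) * Gamma (1+r)) *\<^sub>R phi_frac S (1+r) t w = integral {0..t} (\<lambda>\<sigma>. (\<sigma> powr (1+r-1)) *\<^sub>R S (t-\<sigma>) w)"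
    by (rule phi_ident) (use assms r in auto)
  also have "\<dots> = integral {0..t} (\<lambda>\<sigma>. S (t-\<sigma>) ((\<sigma> powr r) *\<^sub>R w))"
  proof (rule integral_cong)
    fix \<sigma> assume "\<sigma> \<in> {0..t}"
    then show "(\<sigma> powr (1+r-1)) *\<^sub>R S (t-\<sigma>) w = S (t-\<sigma>) ((\<sigma> powr r) *\<^sub>R w)"
      using linear_scale[OF sg_lin[OF C0], of "t - \<sigma>"] by simp
  qed
  finally show ?thesis by (simp add: mult.commute)
qed

lemma scheme_step:
  assumes a: "0 \<le> a" and tau: "0 < \<tau>"
  shows "S \<tau> y + \<tau> *\<^sub>R phi_frac S 1 \<tau> al0 + Gamma (1 + r) *\<^sub>R
            ((a + \<tau>) powr (1 + r) *\<^sub>R phi_frac S (1 + r) (a + \<tau>) al1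
             - a powr (1 + r) *\<^sub>R S \<tau> (phi_frac S (1 + r) a al1))
       = S \<tau> y + integral {0..\<tau>} (\<lambda>\<sigma>. S (\<tau>-\<sigma>) (al0 + ((a+\<sigma>) powr r) *\<^sub>R al1))"
proof -
  have tau0: "0 \<le> \<tau>" using tau by simp
  have g: "continuous_on {0..a+\<tau>} (\<lambda>\<sigma>. (\<sigma> powr r) *\<^sub>R al1)"
    by (intro continuous_intros continuous_on_powr') (use r in auto)
  have Sl: "S \<tau> (c *\<^sub>R v) = c *\<^sub>R S \<tau> v" for c v using linear_scale[OF sg_lin[OF C0 tau0]] by simp
  have "Gamma (1 + r) *\<^sub>R ((a + \<tau>) powr (1 + r) *\<^sub>R phi_frac S (1 + r) (a + \<tau>) al1
             - a powr (1 + r) *\<^sub>R S \<tau> (phi_frac S (1 + r) a al1))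
      = Gamma (1 + r) *\<^sub>R ((a + \<tau>) powr (1 + r) *\<^sub>R phi_frac S (1 + r) (a + \<tau>) al1)
        - S \<tau> (Gamma (1 + r) *\<^sub>R (a powr (1 + r) *\<^sub>R phi_frac S (1 + r) a al1))"
    by (simp add: Sl scaleR_diff_right)
  also have "\<dots> = integral {0..\<tau>} (\<lambda>\<sigma>. S (\<tau>-\<sigma>) (((a+\<sigma>) powr r) *\<^sub>R al1))"
    unfolding phir_ident[OF a] phir_ident[of "a + \<tau>", OF add_nonneg_nonneg[OF a tau0]]
    using conv_split[OF C0 g a tau0] a tau by simp
  finally have 1: "Gamma (1 + r) *\<^sub>R ((a + \<tau>) powr (1 + r) *\<^sub>R phi_frac S (1 + r) (a + \<tau>) al1
             - a powr (1 + r) *\<^sub>R S \<tau> (phi_frac S (1 + r) a al1)) = integral {0..\<tau>} (\<lambda>\<sigma>. S (\<tau>-\<sigma>) (((a+\<sigma>) powr r) *\<^sub>R al1))" .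
  have i1: "(\<lambda>\<sigma>. S (\<tau>-\<sigma>) al0) integrable_on {0..\<tau>}"
    by (rule integrable_continuous_interval, rule conv_cont[OF C0]) auto
  have g2: "continuous_on {0..\<tau>} (\<lambda>\<sigma>. ((a+\<sigma>) powr r) *\<^sub>R al1)"
    by (intro continuous_intros powr_cont_shift a r)
  have i2: "(\<lambda>\<sigma>. S (\<tau>-\<sigma>) (((a+\<sigma>) powr r) *\<^sub>R al1)) integrable_on {0..\<tau>}"
    by (rule integrable_continuous_interval, rule conv_cont[OF C0 g2])
  have "integral {0..\<tau>} (\<lambda>\<sigma>. S (\<tau>-\<sigma>) (al0 + ((a+\<sigma>) powr r) *\<^sub>R al1))
      = integral {0..\<tau>} (\<lambda>\<sigma>. S (\<tau>-\<sigma>) al0 + S (\<tau>-\<sigma>) (((a+\<sigma>) powr r) *\<^sub>R al1))"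
    by (rule integral_cong) (use linear_add[OF sg_lin[OF C0]] in auto)
  also have "\<dots> = integral {0..\<tau>} (\<lambda>\<sigma>. S (\<tau>-\<sigma>) al0) + integral {0..\<tau>} (\<lambda>\<sigma>. S (\<tau>-\<sigma>) (((a+\<sigma>) powr r) *\<^sub>R al1))"
    by (rule integral_add[OF i1 i2])
  finally show ?thesis using 1 phi1_ident[OF tau] by (simp add: add.assoc)
qed

end


lemma interp_bound:
  fixes h h' h'' :: "real \<Rightarrow> 'a::banach"
  assumes d1: "\<And>s. s \<ge> 0 \<Longrightarrow> (h has_vector_derivative h' s) (at s within {0..})"
    and d2: "\<And>s. s \<ge> 0 \<Longrightarrow> (h' has_vector_derivative h'' s) (at s within {0..})"
    and B: "\<And>s. s \<ge> 0 \<Longrightarrow> norm (h'' s) \<le> B"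
    and L: "0 \<le> L" and u: "L \<le> u" "u \<le> R" and a: "L \<le> a" "a \<le> R" and b: "L \<le> b" "b \<le> R"
    and ab: "a \<noteq> b"
  shows "norm (h u - (h a - a *\<^sub>R ((1 / (b - a)) *\<^sub>R (h b - h a))) - u *\<^sub>R ((1 / (b - a)) *\<^sub>R (h b - h a)))
          \<le> 6 * B * (R - L)\<^sup>2"
proof -
  have B0: "B \<ge> 0" using B[of 0] norm_ge_zero order_trans by blast
  have sub: "{L..R} \<subseteq> {0..}" using L by auto
  have D1: "\<And>x. x \<in> {L..R} \<Longrightarrow> (h has_vector_derivative h' x) (at x within {L..R})"
    using d1 sub by (meson has_vector_derivative_within_subset subsetD atLeast_iff)
  have D2: "\<And>x. x \<in> {L..R} \<Longrightarrow> (h' has_vector_derivative h'' x) (at x within {L..R})"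
    using d2 sub by (meson has_vector_derivative_within_subset subsetD atLeast_iff)
  have seg: "closed_segment p q \<subseteq> {L..R}" if "p \<in> {L..R}" "q \<in> {L..R}" for p q
    using that by (intro closed_segment_subset) (auto simp: convex_real_interval)
  have aI: "a \<in> {L..R}" using a by auto
  have h'b: "norm (h' x - h' a) \<le> 3 * B * (R - L)" if x: "x \<in> {L..R}" for x
  proof -
    have "norm (h' x - h' a - (x - a) *\<^sub>R h'' a) \<le> norm (x - a) * (2 * B)"
    proof (rule vector_differentiable_bound_linearization[OF D2 seg[OF aI x] _ aI])
      fix y assume "y \<in> {L..R}"
      then have "norm (h'' y) \<le> B" "norm (h'' a) \<le> B" using B L a by auto
      then show "norm (h'' y - h'' a) \<le> 2 * B" using norm_triangle_ineq4[of "h'' y" "h'' a"] by linarith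
    qed
    then have "norm (h' x - h' a - (x - a) *\<^sub>R h'' a) \<le> \<bar>x - a\<bar> * (2 * B)" by simp
    moreover have "norm ((x - a) *\<^sub>R h'' a) \<le> \<bar>x - a\<bar> * B" using B[of a] a L by (simp add: mult_left_mono)
    ultimately have "norm (h' x - h' a) \<le> \<bar>x - a\<bar> * (2 * B) + \<bar>x - a\<bar> * B"
      using norm_triangle_sub[of "h' x - h' a" "(x - a) *\<^sub>R h'' a"] by linarith
    also have "\<dots> = \<bar>x - a\<bar> * (3 * B)" by simp
    also have "\<dots> \<le> (R - L) * (3 * B)" using x a B0 by (intro mult_right_mono) auto
    finally show ?thesis by (simp add: mult.commute mult.left_commute)
  qed
  define e where "e x = h x - h a - (x - a) *\<^sub>R h' a" for x
  have eb: "norm (e x) \<le> \<bar>x - a\<bar> * (3 * B * (R - L))" if x: "x \<in> {L..R}" for x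
    unfolding e_def using vector_differentiable_bound_linearization[OF D1 seg[OF aI x] h'b aI] by simp
  have bI: "b \<in> {L..R}" and uI: "u \<in> {L..R}" using b u by auto
  have ba: "b - a \<noteq> 0" using ab by simp
  have eq: "h u - (h a - a *\<^sub>R ((1 / (b - a)) *\<^sub>R (h b - h a))) - u *\<^sub>R ((1 / (b - a)) *\<^sub>R (h b - h a))
     = e u - ((u - a) / (b - a)) *\<^sub>R e b"
  proof -
    define al where "al = (1 / (b - a)) *\<^sub>R (h b - h a)"
    have "h b - h a = e b + (b - a) *\<^sub>R h' a" unfolding e_def by simp
    then have al: "al = (1 / (b - a)) *\<^sub>R e b + h' a"
      using ba unfolding al_def by (simp add: scaleR_add_right)
    have "h u - (h a - a *\<^sub>R al) - u *\<^sub>R al = h u - h a - (u - a) *\<^sub>R al"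
      by (simp add: algebra_simps)
    also have "(u - a) *\<^sub>R al = ((u - a) / (b - a)) *\<^sub>R e b + (u - a) *\<^sub>R h' a"
      unfolding al by (simp add: scaleR_add_right)
    finally show ?thesis unfolding al_def[symmetric] e_def by (simp add: algebra_simps)
  qed
  have "norm (e u - ((u - a) / (b - a)) *\<^sub>R e b) \<le> norm (e u) + \<bar>(u - a) / (b - a)\<bar> * norm (e b)"
    using norm_triangle_ineq4 by (metis norm_scaleR)
  also have "\<dots> \<le> \<bar>u - a\<bar> * (3 * B * (R - L)) + \<bar>(u - a) / (b - a)\<bar> * (\<bar>b - a\<bar> * (3 * B * (R - L)))"
    by (intro add_mono mult_left_mono eb uI bI) auto
  also have "\<dots> = 2 * (\<bar>u - a\<bar> * (3 * B * (R - L)))" using ba by (simp add: abs_divide)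
  also have "\<dots> \<le> 2 * ((R - L) * (3 * B * (R - L)))"
    using u a B0 by (intro mult_left_mono mult_right_mono) auto
  also have "\<dots> = 6 * B * (R - L)\<^sup>2" by (simp add: power2_eq_square)
  finally show ?thesis unfolding eq .
qed



lemma dk_bound:
  fixes r :: real and k :: nat
  assumes r: "0 < r" "r < 1" and k: "k \<ge> 1"
  shows "0 \<le> (real k + 1) powr r - real k powr r"
    and "(real k + 1) powr r - real k powr r \<le> real k powr (r - 1)"
proof -
  show "0 \<le> (real k + 1) powr r - real k powr r"
    using r by (simp add: powr_mono2)
  have kp: "real k > 0" using k by simp
  obtain z where z: "real k < z" "z < real k + 1"
    "(real k + 1) powr r - real k powr r = (real k + 1 - real k) * (r * z powr (r - 1))"
  proof -
    have "\<And>x. real k \<le> x \<Longrightarrow> x \<le> real k + 1 \<Longrightarrow> DERIV (\<lambda>x. x powr r) x :> r * x powr (r - 1)"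
      using kp by (intro has_real_derivative_powr) linarith
    from MVT2[of "real k" "real k + 1", OF _ this] show ?thesis using that by auto
  qed
  have "z powr (r - 1) \<le> real k powr (r - 1)"
    using z kp r by (intro powr_mono2') auto
  moreover have "r * z powr (r - 1) \<le> z powr (r - 1)"
    using r by (intro mult_left_le_one_le) auto
  ultimately show "(real k + 1) powr r - real k powr r \<le> real k powr (r - 1)"
    using z(3) by simp
qed


definition Gf :: "real \<Rightarrow> real \<Rightarrow> real" where
  "Gf p x = (if p = 0 then ln x else x powr p / p)"

lemma Gf_step:
  fixes p :: real
  assumes p: "p < 1" and x: "x \<ge> 1"
  shows "(x + 1) powr (p - 1) \<le> Gf p (x + 1) - Gf p x"
proof -
  have xp: "x > 0" using x by simp
  have der: "DERIV (Gf p) y :> y powr (p - 1)" if "y > 0" for y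
  proof (cases "p = 0")
    case True
    then show ?thesis unfolding Gf_def using that DERIV_ln_divide[OF that]
      by (simp add: powr_minus_divide)
  next
    case False
    have "DERIV (\<lambda>y. y powr p / p) y :> p * y powr (p - 1) / p"
      by (intro derivative_eq_intros has_real_derivative_powr that) (use False in auto)
    then show ?thesis unfolding Gf_def using False by simp
  qed
  obtain z where z: "x < z" "z < x + 1" "Gf p (x + 1) - Gf p x = (x + 1 - x) * z powr (p - 1)"
  proof -
    have "\<And>y. x \<le> y \<Longrightarrow> y \<le> x + 1 \<Longrightarrow> DERIV (Gf p) y :> y powr (p - 1)"
      using xp by (intro der) linarith
    from MVT2[of x "x + 1", OF _ this] show ?thesis using that by auto
  qed
  have "(x + 1) powr (p - 1) \<le> z powr (p - 1)"
    using z xp p by (intro powr_mono2') auto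
  then show ?thesis using z(3) by simp
qed

lemma Gf_mono:
  fixes p :: real
  assumes x: "1 \<le> x" "x \<le> y"
  shows "Gf p x \<le> Gf p y"
proof -
  consider "p = 0" | "p > 0" | "p < 0" by linarith
  then show ?thesis
  proof cases
    case 1 then show ?thesis using x by (simp add: Gf_def)
  next
    case 2
    have "x powr p \<le> y powr p" using x 2 by (intro powr_mono2) auto
    then show ?thesis using 2 by (simp add: Gf_def divide_right_mono)
  next
    case 3
    have "y powr p \<le> x powr p" using x 3 by (intro powr_mono2') auto
    then show ?thesis using 3 by (simp add: Gf_def divide_right_mono_neg)
  qed
qed


lemma dsum_bound:
  fixes r :: real
  assumes r: "0 < r" "r < 1" and N: "N \<ge> 1"
  shows "(\<Sum>k<N. ((real k + 1) powr r - real k powr r)\<^sup>2) \<le> 2 + Gf (2*r - 1) (real N) - Gf (2*r - 1) 1"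
proof -
  define d where "d k = (real k + 1) powr r - real k powr r" for k :: nat
  define G where "G = Gf (2*r - 1)"
  have dsq: "(d k)\<^sup>2 \<le> real k powr (2 * r - 2)" if "k \<ge> 1" for k
  proof -
    have "(d k)\<^sup>2 \<le> (real k powr (r - 1))\<^sup>2"
      using dk_bound[OF r that] unfolding d_def by (intro power_mono) auto
    also have "\<dots> = real k powr ((r - 1) + (r - 1))"
      by (simp only: power2_eq_square powr_add)
    also have "\<dots> = real k powr (2 * r - 2)" by (simp add: algebra_simps)
    finally show ?thesis .
  qed
  have P: "(\<Sum>k<m+2. (d k)\<^sup>2) \<le> 2 + G (real m + 1) - G 1" for m :: nat
  proof (induction m)
    case 0
    have "(d 1)\<^sup>2 \<le> 1" using dsq[of 1] by simp
    moreover have "(\<Sum>k<0+2. (d k)\<^sup>2) = (d 0)\<^sup>2 + (d 1)\<^sup>2" by (simp add: numeral_2_eq_2)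
    moreover have "d 0 = 1" by (simp add: d_def)
    ultimately show ?case by simp
  next
    case (Suc m)
    have "(d (m+2))\<^sup>2 \<le> real (m+2) powr (2 * r - 2)" by (rule dsq) simp
    also have "\<dots> = (real m + 1 + 1) powr ((2*r - 1) - 1)" by (simp add: algebra_simps)
    also have "\<dots> \<le> G (real m + 1 + 1) - G (real m + 1)"
      unfolding G_def by (rule Gf_step) (use r in auto)
    moreover have "(\<Sum>k<Suc m+2. (d k)\<^sup>2) = (\<Sum>k<m+2. (d k)\<^sup>2) + (d (m+2))\<^sup>2" by simp
    moreover have "G (real (Suc m) + 1) = G (real m + 1 + 1)" by (simp add: algebra_simps)
    ultimately show ?case using Suc by linarith
  qed
  show ?thesis
  proof (cases "N = 1")
    case True then show ?thesis by (simp add: d_def)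
  next
    case False
    define m where "m = N - 2"
    have m: "N = m + 2" using N False unfolding m_def by simp
    have "G (real m + 1) \<le> G (real N)" unfolding G_def by (rule Gf_mono) (use m in auto)
    then show ?thesis using P[of m] m unfolding d_def G_def by simp
  qed
qed



lemma err_unroll:
  fixes S :: "real \<Rightarrow> 'a::banach \<Rightarrow> 'a"
  assumes C0: "C0_semigroup S" and tau: "\<tau> \<ge> 0"
    and e0: "e 0 = 0" and eS: "\<And>n. e (Suc n) = S \<tau> (e n) + \<delta> n"
  shows "e n = (\<Sum>k<n. S (real (n - Suc k) * \<tau>) (\<delta> k))"
proof (induction n)
  case 0 then show ?case using e0 by simp
next
  case (Suc n)
  have "S \<tau> (\<Sum>k<n. S (real (n - Suc k) * \<tau>) (\<delta> k)) = (\<Sum>k<n. S \<tau> (S (real (n - Suc k) * \<tau>) (\<delta> k)))"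
    by (rule linear_sum[OF sg_lin[OF C0 tau]])
  also have "\<dots> = (\<Sum>k<n. S (real (Suc n - Suc k) * \<tau>) (\<delta> k))"
  proof (rule sum.cong)
    fix k assume k: "k \<in> {..<n}"
    have "S \<tau> (S (real (n - Suc k) * \<tau>) (\<delta> k)) = S (\<tau> + real (n - Suc k) * \<tau>) (\<delta> k)"
      using sg_add[OF C0 tau, of "real (n - Suc k) * \<tau>"] tau by simp
    also have "\<tau> + real (n - Suc k) * \<tau> = real (Suc n - Suc k) * \<tau>"
      using k by (simp add: of_nat_diff Suc_diff_Suc algebra_simps)
    finally show "S \<tau> (S (real (n - Suc k) * \<tau>) (\<delta> k)) = S (real (Suc n - Suc k) * \<tau>) (\<delta> k)" .
  qed simp
  finally show ?case using Suc eS by (simp add: sg_0[OF C0])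
qed

lemma powr_strict_inj:
  fixes x y r :: real
  assumes "0 \<le> x" "0 \<le> y" "0 < r" "x \<noteq> y"
  shows "x powr r \<noteq> y powr r"
proof (cases "x < y")
  case True then show ?thesis using powr_less_mono2[of r x y] assms by auto
next
  case False then have "y < x" using assms by auto
  then show ?thesis using powr_less_mono2[of r y x] assms by auto
qed



lemma local_err:
  fixes S :: "real \<Rightarrow> 'a::banach \<Rightarrow> 'a" and h h' h'' :: "real \<Rightarrow> 'a"
  assumes C0: "C0_semigroup S"
    and d1: "\<And>s. s \<ge> 0 \<Longrightarrow> (h has_vector_derivative h' s) (at s within {0..})"
    and d2: "\<And>s. s \<ge> 0 \<Longrightarrow> (h' has_vector_derivative h'' s) (at s within {0..})"
    and hc: "continuous_on {0..} h"
    and Bh: "\<And>s. s \<ge> 0 \<Longrightarrow> norm (h'' s) \<le> B"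
    and M: "\<And>t v. 0 \<le> t \<Longrightarrow> t \<le> \<tau> \<Longrightarrow> norm (S t v) \<le> M * norm v" and M0: "M \<ge> 0"
    and tau: "\<tau> > 0" and tn: "tn \<ge> 0" and r: "0 < r"
    and c1: "c1 \<in> {0..1}" and c2: "c2 \<in> {0..1}" and c12: "c1 \<noteq> c2"
    and a: "a = (tn + c1 * \<tau>) powr r" and b: "b = (tn + c2 * \<tau>) powr r"
    and al1: "al1 = (1 / (b - a)) *\<^sub>R (h b - h a)" and al0: "al0 = h a - a *\<^sub>R al1"
  shows "norm (integral {0..\<tau>} (\<lambda>\<sigma>. S (\<tau>-\<sigma>) (h ((tn+\<sigma>) powr r)))
             - integral {0..\<tau>} (\<lambda>\<sigma>. S (\<tau>-\<sigma>) (al0 + ((tn+\<sigma>) powr r) *\<^sub>R al1)))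
         \<le> M * (6 * B * ((tn + \<tau>) powr r - tn powr r)\<^sup>2) * \<tau>"
proof -
  have B0: "B \<ge> 0" using Bh[of 0] norm_ge_zero order_trans by blast
  define L where "L = tn powr r"
  define R where "R = (tn + \<tau>) powr r"
  define Bd where "Bd = M * (6 * B * (R - L)\<^sup>2)"
  have Bd0: "Bd \<ge> 0" unfolding Bd_def using M0 B0 by simp
  have g1: "continuous_on {0..\<tau>} (\<lambda>\<sigma>. h ((tn + \<sigma>) powr r))"
    by (rule hcomp_cont[OF C0 hc r tn])
  have g2: "continuous_on {0..\<tau>} (\<lambda>\<sigma>. al0 + ((tn+\<sigma>) powr r) *\<^sub>R al1)"
    by (intro continuous_intros powr_cont_shift tn r)
  have i1: "(\<lambda>\<sigma>. S (\<tau>-\<sigma>) (h ((tn+\<sigma>) powr r))) integrable_on {0..\<tau>}"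
    by (rule integrable_continuous_interval, rule conv_cont[OF C0 g1])
  have i2: "(\<lambda>\<sigma>. S (\<tau>-\<sigma>) (al0 + ((tn+\<sigma>) powr r) *\<^sub>R al1)) integrable_on {0..\<tau>}"
    by (rule integrable_continuous_interval, rule conv_cont[OF C0 g2])
  define F where "F \<sigma> = S (\<tau>-\<sigma>) (h ((tn+\<sigma>) powr r) - (al0 + ((tn+\<sigma>) powr r) *\<^sub>R al1))" for \<sigma>
  have "integral {0..\<tau>} (\<lambda>\<sigma>. S (\<tau>-\<sigma>) (h ((tn+\<sigma>) powr r)))
             - integral {0..\<tau>} (\<lambda>\<sigma>. S (\<tau>-\<sigma>) (al0 + ((tn+\<sigma>) powr r) *\<^sub>R al1))
      = integral {0..\<tau>} (\<lambda>\<sigma>. S (\<tau>-\<sigma>) (h ((tn+\<sigma>) powr r)) - S (\<tau>-\<sigma>) (al0 + ((tn+\<sigma>) powr r) *\<^sub>R al1))"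
    by (rule integral_diff[OF i1 i2, symmetric])
  also have "\<dots> = integral {0..\<tau>} F"
    unfolding F_def by (rule integral_cong) (use linear_diff[OF sg_lin[OF C0]] in auto)
  finally have eq: "integral {0..\<tau>} (\<lambda>\<sigma>. S (\<tau>-\<sigma>) (h ((tn+\<sigma>) powr r)))
             - integral {0..\<tau>} (\<lambda>\<sigma>. S (\<tau>-\<sigma>) (al0 + ((tn+\<sigma>) powr r) *\<^sub>R al1)) = integral {0..\<tau>} F" .
  have Fi: "F integrable_on {0..\<tau>}"
    unfolding F_def using integrable_diff[OF i1 i2]
    by (rule integrable_eq) (use linear_diff[OF sg_lin[OF C0]] in auto)
  have pmono: "x powr r \<le> y powr r" if "0 \<le> x" "x \<le> y" for x y :: real
    using that r by (intro powr_mono2) auto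
  have Fb: "norm (F \<sigma>) \<le> Bd" if s: "\<sigma> \<in> cbox 0 \<tau>" for \<sigma>
  proof -
    have s': "0 \<le> \<sigma>" "\<sigma> \<le> \<tau>" using s by auto
    have ab: "a \<noteq> b" unfolding a b
      by (rule powr_strict_inj) (use tn tau c1 c2 c12 r in auto)
    have "norm (h ((tn+\<sigma>) powr r) - (h a - a *\<^sub>R al1) - ((tn+\<sigma>) powr r) *\<^sub>R al1) \<le> 6 * B * (R - L)\<^sup>2"
      unfolding al1
    proof (rule interp_bound[OF d1 d2 Bh])
      show "0 \<le> L" unfolding L_def by simp
      show "L \<le> (tn + \<sigma>) powr r" "(tn + \<sigma>) powr r \<le> R" unfolding L_def R_def
        using s' tn by (auto intro!: pmono)
      show "L \<le> a" "a \<le> R" unfolding L_def R_def a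
        using tn tau c1 by (auto intro!: pmono simp: mult_left_le)
      show "L \<le> b" "b \<le> R" unfolding L_def R_def b
        using tn tau c2 by (auto intro!: pmono simp: mult_left_le)
    qed (use ab in auto)
    then have hb: "norm (h ((tn+\<sigma>) powr r) - (al0 + ((tn+\<sigma>) powr r) *\<^sub>R al1)) \<le> 6 * B * (R - L)\<^sup>2"
      unfolding al0 by (simp add: algebra_simps)
    have "norm (F \<sigma>) \<le> M * norm (h ((tn+\<sigma>) powr r) - (al0 + ((tn+\<sigma>) powr r) *\<^sub>R al1))"
      unfolding F_def by (rule M) (use s' in auto)
    also have "\<dots> \<le> Bd" unfolding Bd_def by (rule mult_left_mono[OF hb M0])
    finally show ?thesis .
  qed
  have "norm (integral {0..\<tau>} F) \<le> Bd * \<tau>"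
  proof -
    have Fi': "F integrable_on cbox 0 \<tau>" using Fi by simp
    show ?thesis using has_integral_bound[OF Bd0 integrable_integral[OF Fi'] Fb] tau by simp
  qed
  then show ?thesis unfolding eq Bd_def R_def L_def .
qed



lemma t2: fixes p r :: real assumes "p < 0" "p = - (1 - 2*r)" shows "Gf p 1 = - (1 / (1 - 2*r))"
proof -
  have "Gf p 1 = 1 / p" using assms unfolding Gf_def by simp
  also have "\<dots> = 1 / (- (1 - 2*r))" using assms(2) by simp
  also have "\<dots> = - (1 / (1 - 2*r))" by (rule divide_minus_right)
  finally show ?thesis .
qed

lemma t3: fixes r :: real assumes "r < 1/2" shows "min (1 + 2*r) 2 = 1 + 2*r" using assms by simp

lemma t4: fixes r \<tau> :: real assumes "r < 1/2" and X: "A \<le> 2 + 1 / (1 - 2*r)"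
  shows "\<tau> powr (1 + 2*r) * A \<le> (if r < 1/2 then 2 + 1 / (1 - 2*r) else if r = 1/2 then 2 + \<bar>ln T\<bar>
         else 2 * T powr (2*r - 1) + T powr (2*r - 1) / (2*r - 1))
       * (if r = 1/2 then \<tau>\<^sup>2 * (1 + \<bar>ln \<tau>\<bar>) else \<tau> powr (min (1 + 2 * r) 2))"
proof -
  have m: "min (1 + 2*r) 2 = 1 + 2*r" using assms by simp
  have "\<tau> powr (1 + 2*r) * A \<le> \<tau> powr (1 + 2*r) * (2 + 1 / (1 - 2*r))"
    by (rule mult_left_mono[OF X]) simp
  also have "\<dots> = (2 + 1 / (1 - 2*r)) * \<tau> powr (1 + 2*r)" by (rule mult.commute)
  finally show ?thesis using assms unfolding m by simp
qed



lemma t5: fixes T \<tau> :: real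
  shows "2 + ln T - ln \<tau> \<le> (2 + \<bar>ln T\<bar>) * (1 + \<bar>ln \<tau>\<bar>)"
proof -
  have "2 + ln T - ln \<tau> \<le> 2 + \<bar>ln T\<bar> + \<bar>ln \<tau>\<bar>" by linarith
  also have "\<dots> \<le> (2 + \<bar>ln T\<bar>) * (1 + \<bar>ln \<tau>\<bar>)"
  proof -
    have "0 \<le> \<bar>ln T\<bar> * \<bar>ln \<tau>\<bar>" by simp
    moreover have "(2 + \<bar>ln T\<bar>) * (1 + \<bar>ln \<tau>\<bar>) = 2 + \<bar>ln T\<bar> + 2 * \<bar>ln \<tau>\<bar> + \<bar>ln T\<bar> * \<bar>ln \<tau>\<bar>"
      by (simp add: algebra_simps)
    ultimately show ?thesis by simp
  qed
  finally show ?thesis .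
qed

lemma t6: fixes \<tau> :: real assumes "\<tau> > 0" shows "\<tau> powr (1 + 2*(1/2)) = \<tau>\<^sup>2"
proof -
  have "1 + 2*(1/2::real) = 2" by simp
  then show ?thesis using assms by simp
qed



lemma rate_bound:
  fixes T r \<tau> :: real and N :: nat
  assumes T: "T > 0" and r: "0 < r" "r < 1" and N: "N \<ge> 1" and tau: "\<tau> = T / real N"
  shows "\<tau> powr (1 + 2*r) * (2 + Gf (2*r - 1) (real N) - Gf (2*r - 1) 1)
     \<le> (if r < 1/2 then 2 + 1 / (1 - 2*r) else if r = 1/2 then 2 + \<bar>ln T\<bar>
         else 2 * T powr (2*r - 1) + T powr (2*r - 1) / (2*r - 1))
       * (if r = 1/2 then \<tau>\<^sup>2 * (1 + \<bar>ln \<tau>\<bar>) else \<tau> powr (min (1 + 2 * r) 2))"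
proof -
  define p where "p = 2*r - 1"
  have Np: "real N > 0" using N by simp
  have taup: "\<tau> > 0" using T Np tau by simp
  have tauT: "\<tau> \<le> T" using T N tau by (simp add: divide_le_eq)
  have NT: "real N = T / \<tau>" using tau taup Np by (simp add: field_simps)
  consider "r < 1/2" | "r = 1/2" | "r > 1/2" by linarith
  then show ?thesis
  proof cases
    case 1
    then have p: "p < 0" unfolding p_def by auto
    have Npp: "real N powr p > 0" using Np by simp
    have G1: "Gf p (real N) \<le> 0" using divide_nonneg_neg[OF less_imp_le[OF Npp] p] p unfolding Gf_def by simp
    have G2: "Gf p 1 = - (1 / (1 - 2*r))" by (rule t2[OF p]) (simp add: p_def)
    have X: "2 + Gf p (real N) - Gf p 1 \<le> 2 + 1 / (1 - 2*r)"
      using G1 G2 by linarith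
    show ?thesis using t4[OF 1 X] by (simp only: p_def)
  next
    case 2
    then have p: "p = 0" unfolding p_def by simp
    have X: "2 + Gf p (real N) - Gf p 1 = 2 + ln T - ln \<tau>"
      using p NT T taup by (simp add: Gf_def ln_div)
    have e0: "1 + 2*r = 2" using 2 by simp
    have e: "\<tau> powr (1 + 2*r) = \<tau>\<^sup>2" unfolding e0 using taup by simp
    have "\<tau> powr (1 + 2*r) * (2 + Gf p (real N) - Gf p 1) = \<tau>\<^sup>2 * (2 + ln T - ln \<tau>)"
      unfolding e X ..
    also have "\<dots> \<le> \<tau>\<^sup>2 * ((2 + \<bar>ln T\<bar>) * (1 + \<bar>ln \<tau>\<bar>))"
      by (rule mult_left_mono[OF t5]) simp
    also have "\<dots> = (2 + \<bar>ln T\<bar>) * (\<tau>\<^sup>2 * (1 + \<bar>ln \<tau>\<bar>))" by (simp only: mult_ac)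
    finally have Y: "\<tau> powr (1 + 2*r) * (2 + Gf p (real N) - Gf p 1) \<le> (2 + \<bar>ln T\<bar>) * (\<tau>\<^sup>2 * (1 + \<bar>ln \<tau>\<bar>))" .
    show ?thesis using Y unfolding p_def 2 by simp
  next
    case 3
    then have p: "p > 0" unfolding p_def by auto
    have X: "2 + Gf p (real N) - Gf p 1 \<le> 2 + real N powr p / p"
      using p by (simp add: Gf_def)
    have ee: "1 + 2*r = 2 + p" unfolding p_def by simp
    have e1: "\<tau> powr (1 + 2*r) = \<tau> powr 2 * \<tau> powr p" unfolding ee by (rule powr_add)
    have e2: "real N powr p = T powr p / \<tau> powr p" unfolding NT using T taup by (simp add: powr_divide)
    have tp: "\<tau> powr p \<le> T powr p" using p taup tauT by (intro powr_mono2) auto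
    have tpp: "\<tau> powr p > 0" using taup by simp
    have "\<tau> powr (1 + 2*r) * (2 + Gf p (real N) - Gf p 1) \<le> \<tau> powr (1 + 2*r) * (2 + real N powr p / p)"
      by (rule mult_left_mono[OF X]) simp
    also have "\<dots> = \<tau> powr 2 * (2 * \<tau> powr p + T powr p / p)"
      unfolding e1 e2 using tpp p by (simp add: field_simps)
    also have "\<dots> \<le> \<tau> powr 2 * (2 * T powr p + T powr p / p)"
      using tp by (intro mult_left_mono) auto
    also have "\<dots> = (2 * T powr p + T powr p / p) * \<tau> powr 2" by (rule mult.commute)
    finally have Y: "\<tau> powr (1 + 2*r) * (2 + Gf p (real N) - Gf p 1) \<le> (2 * T powr p + T powr p / p) * \<tau> powr 2" .
    have m: "min (1 + 2*r) 2 = 2" using 3 by simp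
    have n1: "r \<noteq> 1/2" "\<not> r < 1/2" using 3 by auto
    show ?thesis using Y unfolding m p_def by (simp only: n1 if_False)
  qed
qed



lemma powr_sq_aux:
  fixes \<tau> r d :: real assumes "\<tau> > 0"
  shows "(\<tau> powr r * d)\<^sup>2 * \<tau> = \<tau> powr (1 + 2*r) * d\<^sup>2"
proof -
  have e: "1 + 2*r = 1 + (r + r)" by simp
  have "\<tau> powr (1 + 2*r) = \<tau> powr 1 * (\<tau> powr r * \<tau> powr r)"
    unfolding e by (simp only: powr_add)
  then show ?thesis using assms by (simp add: power2_eq_square algebra_simps)
qed

theorem theorem2:
  fixes S :: "real \<Rightarrow> 'a::banach \<Rightarrow> 'a"
    and h h' h'' :: "real \<Rightarrow> 'a"
    and T r c1 c2 :: real and y0 :: 'a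
  assumes "C0_semigroup S"
    and "T > 0" and "0 < r" and "r < 1"
    and "c1 \<in> {0..1}" and "c2 \<in> {0..1}" and "c1 \<noteq> c2"
    and "\<And>s. s \<ge> 0 \<Longrightarrow> (h has_vector_derivative h' s) (at s within {0..})"
    and "\<And>s. s \<ge> 0 \<Longrightarrow> (h' has_vector_derivative h'' s) (at s within {0..})"
    and "bounded (h' ` {0..})" and "bounded (h'' ` {0..})"
  shows "\<exists>C. \<forall>N::nat. N \<ge> 1 \<longrightarrow> (\<forall>n\<le>N.
           norm (mild_sol S h r y0 (real n * (T / real N)) - eqrf2 S h r c1 c2 (T / real N) y0 n)
           \<le> C * (if r = 1/2 then (T / real N)\<^sup>2 * (1 + \<bar>ln (T / real N)\<bar>)
                  else (T / real N) powr (min (1 + 2 * r) 2)))"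
proof -
  note C0 = assms(1) and T = assms(2) and r = assms(3) and r1 = assms(4)
    and c1 = assms(5) and c2 = assms(6) and c12 = assms(7) and d1 = assms(8) and d2 = assms(9)
  have hc: "continuous_on {0..} h"
    unfolding continuous_on_eq_continuous_within
  proof
    fix s :: real assume "s \<in> {0..}"
    then show "continuous (at s within {0..}) h" by (intro has_vector_derivative_continuous[OF d1]) simp
  qed
  obtain B where Bh: "\<And>s. s \<ge> 0 \<Longrightarrow> norm (h'' s) \<le> B"
    using assms(11) unfolding bounded_iff by auto
  have B0: "B \<ge> 0" using Bh[of 0] norm_ge_zero order_trans by blast
  obtain M where M1: "M \<ge> 1" and M: "\<And>t v. 0 \<le> t \<Longrightarrow> t \<le> T \<Longrightarrow> norm (S t v) \<le> M * norm v"
    using sg_bound[OF C0, of T] by blast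
  define K0 where "K0 = 6 * M * M * B"
  have K00: "K0 \<ge> 0" unfolding K0_def using M1 B0 by simp
  define Cc where "Cc = (if r < 1/2 then 2 + 1 / (1 - 2*r) else if r = 1/2 then 2 + \<bar>ln T\<bar>
         else 2 * T powr (2*r - 1) + T powr (2*r - 1) / (2*r - 1))"
  show ?thesis
  proof (intro exI[of _ "K0 * Cc"] allI impI)
    fix N n :: nat assume N: "N \<ge> 1" and nN: "n \<le> N"
    define \<tau> where "\<tau> = T / real N"
    have Np: "real N > 0" using N by simp
    have tau: "\<tau> > 0" unfolding \<tau>_def using T Np by simp
    have tauT: "\<tau> \<le> T" unfolding \<tau>_def using T N by (simp add: divide_le_eq)
    define y where "y m = eqrf2 S h r c1 c2 \<tau> y0 m" for m
    define x where "x m = mild_sol S h r y0 (real m * \<tau>)" for m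
    define e where "e m = x m - y m" for m
    define aa where "aa m = (real m * \<tau> + c1 * \<tau>) powr r" for m
    define bb where "bb m = (real m * \<tau> + c2 * \<tau>) powr r" for m
    define al1 where "al1 m = (1 / (bb m - aa m)) *\<^sub>R (h (bb m) - h (aa m))" for m
    define al0 where "al0 m = h (aa m) - aa m *\<^sub>R al1 m" for m
    define \<delta> where "\<delta> m = integral {0..\<tau>} (\<lambda>\<sigma>. S (\<tau>-\<sigma>) (h ((real m * \<tau> + \<sigma>) powr r)))
        - integral {0..\<tau>} (\<lambda>\<sigma>. S (\<tau>-\<sigma>) (al0 m + ((real m * \<tau> + \<sigma>) powr r) *\<^sub>R al1 m))" for m
    have tn: "real m * \<tau> \<ge> 0" for m using tau by simp
    have yS: "y (Suc m) = S \<tau> (y m) + integral {0..\<tau>} (\<lambda>\<sigma>. S (\<tau>-\<sigma>) (al0 m + ((real m * \<tau> + \<sigma>) powr r) *\<^sub>R al1 m))" for m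
      unfolding y_def eqrf2.simps Let_def al0_def al1_def aa_def bb_def
      by (rule scheme_step[OF C0 hc r tn tau])
    have xS: "x (Suc m) = S \<tau> (x m) + integral {0..\<tau>} (\<lambda>\<sigma>. S (\<tau>-\<sigma>) (h ((real m * \<tau> + \<sigma>) powr r)))" for m
    proof -
      have "real (Suc m) * \<tau> = real m * \<tau> + \<tau>" by (simp add: algebra_simps)
      then show ?thesis unfolding x_def using exact_step[OF C0 hc r tn less_imp_le[OF tau]] by simp
    qed
    have eS: "e (Suc m) = S \<tau> (e m) + \<delta> m" for m
      unfolding e_def xS yS \<delta>_def using linear_diff[OF sg_lin[OF C0 less_imp_le[OF tau]]]
      by (simp add: algebra_simps)
    have e0: "e 0 = 0" unfolding e_def x_def y_def mild_sol_def by (simp add: sg_0[OF C0])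
    have eu: "e n = (\<Sum>k<n. S (real (n - Suc k) * \<tau>) (\<delta> k))"
      by (rule err_unroll[OF C0 less_imp_le[OF tau] e0 eS])
    define d where "d k = (real k + 1) powr r - real k powr r" for k :: nat
    have dbound: "norm (\<delta> k) \<le> K0 / M * (\<tau> powr (1 + 2*r) * (d k)\<^sup>2)" for k
    proof -
      have Mt: "norm (S t v) \<le> M * norm v" if "0 \<le> t" "t \<le> \<tau>" for t v
        using M that tauT by auto
      have "norm (\<delta> k) \<le> M * (6 * B * ((real k * \<tau> + \<tau>) powr r - (real k * \<tau>) powr r)\<^sup>2) * \<tau>"
        unfolding \<delta>_def
        by (rule local_err[OF C0 d1 d2 hc Bh Mt _ tau tn r c1 c2 c12 aa_def bb_def al1_def al0_def])
           (use M1 in auto)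
      also have "(real k * \<tau> + \<tau>) powr r - (real k * \<tau>) powr r = \<tau> powr r * d k"
      proof -
        have eq: "real k * \<tau> + \<tau> = (real k + 1) * \<tau>" by (simp add: algebra_simps)
        have p1: "(real k * \<tau> + \<tau>) powr r = (real k + 1) powr r * \<tau> powr r"
          unfolding eq using tau by (simp add: powr_mult)
        have p2: "(real k * \<tau>) powr r = real k powr r * \<tau> powr r"
          using tau by (simp add: powr_mult)
        show ?thesis unfolding p1 p2 d_def by (simp add: algebra_simps)
      qed
      also have "M * (6 * B * (\<tau> powr r * d k)\<^sup>2) * \<tau> = 6 * M * B * ((\<tau> powr r * d k)\<^sup>2 * \<tau>)"
        by (simp add: algebra_simps)
      also have "\<dots> = K0 / M * (\<tau> powr (1 + 2*r) * (d k)\<^sup>2)"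
        unfolding powr_sq_aux[OF tau] K0_def using M1 by simp
      finally show ?thesis .
    qed
    have "norm (e n) \<le> (\<Sum>k<n. norm (S (real (n - Suc k) * \<tau>) (\<delta> k)))"
      unfolding eu by (rule norm_sum)
    also have "\<dots> \<le> (\<Sum>k<n. M * (K0 / M * (\<tau> powr (1 + 2*r) * (d k)\<^sup>2)))"
    proof (rule sum_mono)
      fix k assume k: "k \<in> {..<n}"
      have "real (n - Suc k) * \<tau> \<le> real N * \<tau>"
        using k nN tau by (intro mult_right_mono) auto
      also have "real N * \<tau> = T" unfolding \<tau>_def using Np by simp
      finally have le: "real (n - Suc k) * \<tau> \<le> T" .
      have "norm (S (real (n - Suc k) * \<tau>) (\<delta> k)) \<le> M * norm (\<delta> k)"
        by (rule M[OF _ le]) (use tau in simp)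
      also have "\<dots> \<le> M * (K0 / M * (\<tau> powr (1 + 2*r) * (d k)\<^sup>2))"
        by (rule mult_left_mono[OF dbound]) (use M1 in simp)
      finally show "norm (S (real (n - Suc k) * \<tau>) (\<delta> k)) \<le> M * (K0 / M * (\<tau> powr (1 + 2*r) * (d k)\<^sup>2))" .
    qed
    also have "\<dots> = K0 * \<tau> powr (1 + 2*r) * (\<Sum>k<n. (d k)\<^sup>2)"
      using M1 by (simp add: sum_distrib_left algebra_simps)
    also have "\<dots> \<le> K0 * \<tau> powr (1 + 2*r) * (\<Sum>k<N. (d k)\<^sup>2)"
      by (intro mult_left_mono sum_mono2) (use nN K00 in auto)
    also have "\<dots> \<le> K0 * \<tau> powr (1 + 2*r) * (2 + Gf (2*r - 1) (real N) - Gf (2*r - 1) 1)"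
      unfolding d_def by (intro mult_left_mono dsum_bound[OF r r1 N]) (use K00 in auto)
    also have "\<dots> = K0 * (\<tau> powr (1 + 2*r) * (2 + Gf (2*r - 1) (real N) - Gf (2*r - 1) 1))"
      by (simp only: mult.assoc)
    also have "\<dots> \<le> K0 * (Cc * (if r = 1/2 then \<tau>\<^sup>2 * (1 + \<bar>ln \<tau>\<bar>) else \<tau> powr (min (1 + 2 * r) 2)))"
      unfolding Cc_def by (intro mult_left_mono rate_bound[OF T r r1 N \<tau>_def] K00)
    finally show "norm (mild_sol S h r y0 (real n * (T / real N)) - eqrf2 S h r c1 c2 (T / real N) y0 n)
           \<le> K0 * Cc * (if r = 1/2 then (T / real N)\<^sup>2 * (1 + \<bar>ln (T / real N)\<bar>)
                  else (T / real N) powr (min (1 + 2 * r) 2))"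
      unfolding e_def x_def y_def \<tau>_def by (simp only: mult.assoc)
  qed
qed

end
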